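(* Let $\xi_1,\xi_2,\ldots$ be i.i.d.\ nonnegative real random variables with $\overline F(x):=\P(\xi_1\geq x)=x^{-1}\ell(x)$ for $x\to\infty$, where $\ell$ is slowly varying. Let $G(x):=\int_0^x\overline F(t)\,dt$ and $S_k:=\sum_{i=1}^k\xi_i$. Let $(x_n)_{n\geq1}$ be a positive sequence with $\liminf_{n\to\infty}\frac{x_n}{nG(x_n)}>0$ and let $(a_n)_{n\geq1}$ be a positive sequence with $\lim_{n\to\infty}a_n\in(0,\infty)$. Then, as $n\to\infty$, $$\max_{1\leq k\leq n}\P(S_k-kG(x_n)\geq a_nx_n)=O(n\overline F(x_n)).$$
   Context: A function $\ell$ is slowly varying if $\ell(\lambda x)/\ell(x)\to1$ as $x\to\infty$ for every $\lambda>0$. *)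

theory Defs
  imports "HOL-Probability.Probability" "HOL-Library.Landau_Symbols"
begin

definition slowly_varying :: "(real \<Rightarrow> real) \<Rightarrow> bool" where
  "slowly_varying l \<longleftrightarrow>
     (\<forall>lam::real. lam > 0 \<longrightarrow> ((\<lambda>x. l (lam * x) / l x) \<longlongrightarrow> 1) at_top)"

end

theory Submission
  imports Defs
begin


lemma dyadic_pt:
  fixes y z :: real
  assumes "0 \<le> z" "z < y"
  shows "z\<^sup>2 \<le> (\<Sum>j<J. (y/2^j)\<^sup>2 * indicator {y/2^(Suc j)..} z) + (y/2^J)\<^sup>2"
proof (induction J)
  case 0
  then show ?case using assms by (simp add: power_mono)
next
  case (Suc J)
  show ?case
  proof (cases "y/2^(Suc J) \<le> z")
    case True
    then have "(\<Sum>j<Suc J. (y/2^j)\<^sup>2 * indicator {y/2^(Suc j)..} z) = (\<Sum>j<J. (y/2^j)\<^sup>2 * indicator {y/2^(Suc j)..} z) + (y/2^J)\<^sup>2"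
      by simp
    then show ?thesis using Suc by (smt (verit) zero_le_power2)
  next
    case False
    have "z\<^sup>2 \<le> (y/2^Suc J)\<^sup>2" using False assms by (intro power_mono) auto
    moreover have "0 \<le> (\<Sum>j<Suc J. (y/2^j)\<^sup>2 * indicator {y/2^(Suc j)..} z)"
      by (intro sum_nonneg) auto
    ultimately show ?thesis by linarith
  qed
qed

lemma riemann_pt:
  fixes h z :: real
  assumes "h > 0" "0 \<le> z"
  shows "z < real N * h \<Longrightarrow> z \<le> h + (\<Sum>i\<in>{1..N}. h * indicator {real i * h..} z)"
proof (induction N)
  case 0
  then show ?case using assms by simp
next
  case (Suc N)
  have nn: "0 \<le> h * indicator {real (Suc N) * h..} z" using assms by simp
  have split: "(\<Sum>i\<in>{1..Suc N}. h * indicator {real i * h..} z) = (\<Sum>i\<in>{1..N}. h * indicator {real i * h..} z) + h * indicator {real (Suc N) * h..} z"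
    by simp
  show ?case
  proof (cases "z < real N * h")
    case True
    then show ?thesis using Suc.IH nn split by linarith
  next
    case False
    have "(\<Sum>i\<in>{1..N}. h * indicator {real i * h..} z) = (\<Sum>i\<in>{1..N}. h)"
    proof (rule sum.cong)
      fix i assume "i \<in> {1..N}"
      then have "real i * h \<le> real N * h" using assms by (intro mult_right_mono) auto
      then show "h * indicator {real i * h..} z = h" using False by (simp add: indicator_def)
    qed simp
    then have "(\<Sum>i\<in>{1..N}. h * indicator {real i * h..} z) = real N * h" by simp
    moreover have "real (Suc N) * h = real N * h + h" by (simp add: algebra_simps)
    ultimately show ?thesis using Suc.prems nn split by linarith
  qed
qed

lemma antitone_integrable:
  fixes F :: "real \<Rightarrow> real"
  assumes "\<And>s t. s \<le> t \<Longrightarrow> F t \<le> F s"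
  shows "F integrable_on {a..b}"
proof -
  have "mono_on {a..b} (\<lambda>t. - F t)" using assms by (auto simp: mono_on_def)
  then have "(\<lambda>t. - F t) integrable_on {a..b}" by (rule integrable_on_mono_on)
  then have "(\<lambda>t. - (- F t)) integrable_on {a..b}" by (rule integrable_neg)
  then show ?thesis by simp
qed

lemma riemann_int:
  fixes F :: "real \<Rightarrow> real" and h :: real
  assumes anti: "\<And>s t. s \<le> t \<Longrightarrow> F t \<le> F s" and "h > 0"
  shows "(\<Sum>i\<in>{1..N}. h * F (real i * h)) \<le> integral {0..real N * h} F"
proof (induction N)
  case 0
  then show ?case by simp
next
  case (Suc N)
  have le: "real N * h \<le> real (Suc N) * h" using assms by (simp add: algebra_simps)
  have c: "integral {0..real N * h} F + integral {real N * h..real (Suc N) * h} F = integral {0..real (Suc N) * h} F"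
    apply (rule Henstock_Kurzweil_Integration.integral_combine)
    using assms le apply simp
    using le apply simp
    by (rule antitone_integrable[OF anti])
  have "integral {real N * h..real (Suc N) * h} (\<lambda>t. F (real (Suc N) * h)) \<le> integral {real N * h..real (Suc N) * h} F"
    by (intro integral_le antitone_integrable[OF anti] anti) auto
  moreover have "integral {real N * h..real (Suc N) * h} (\<lambda>t. F (real (Suc N) * h)) = h * F (real (Suc N) * h)"
    using assms by (simp add: algebra_simps)
  moreover have "(\<Sum>i\<in>{1..Suc N}. h * F (real i * h)) = (\<Sum>i\<in>{1..N}. h * F (real i * h)) + h * F (real (Suc N) * h)"
    by simp
  ultimately show ?case using Suc c by linarith
qed

lemma G_ge:
  fixes F :: "real \<Rightarrow> real"
  assumes anti: "\<And>s t. s \<le> t \<Longrightarrow> F t \<le> F s" and "x \<ge> 0"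
  shows "x * F x \<le> integral {0..x} F"
proof -
  have "integral {0..x} (\<lambda>t. F x) \<le> integral {0..x} F"
    by (intro integral_le antitone_integrable[OF anti] anti) auto
  then show ?thesis using assms by simp
qed

lemma ratio_iter:
  fixes F :: "real \<Rightarrow> real"
  assumes anti: "\<And>s t. s \<le> t \<Longrightarrow> F t \<le> F s"
    and r: "\<And>t. t \<ge> T \<Longrightarrow> F (t/2) \<le> 3 * F t"
    and "T \<le> y/2^J"  "T > 0"
  shows "i \<le> J \<Longrightarrow> F (y/2^i) \<le> 3^i * F y"
proof (induction i)
  case 0
  then show ?case by simp
next
  case (Suc i)
  have y: "y > 0" using assms by (smt (verit) divide_nonpos_pos zero_less_power)
  have "y/2^J \<le> y/2^i" using Suc.prems y by (intro divide_left_mono) auto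
  then have "F ((y/2^i)/2) \<le> 3 * F (y/2^i)" using assms by (intro r) auto
  moreover have "(y/2^i)/2 = y/2^(Suc i)" by simp
  ultimately have "F (y/2^(Suc i)) \<le> 3 * F (y/2^i)" by metis
  also have "\<dots> \<le> 3 * (3^i * F y)" using Suc by simp
  finally show ?case by simp
qed

lemma exists_J:
  fixes y T0 :: real
  assumes "T0 > 0" "y \<ge> T0"
  shows "\<exists>J::nat. T0 \<le> y/2^J \<and> y/2^J < 2*T0"
proof -
  define r where "r = log 2 (y/T0)"
  have yT: "y/T0 \<ge> 1" using assms by simp
  have r0: "r \<ge> 0" unfolding r_def using yT by simp
  define J where "J = nat \<lfloor>r\<rfloor>"
  have J1: "real J \<le> r" and J2: "r < real J + 1" unfolding J_def using r0 by linarith+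
  have e: "2 powr r = y/T0" unfolding r_def using yT by simp
  have "(2::real)^J = 2 powr (real J)" by (simp add: powr_realpow)
  also have "\<dots> \<le> 2 powr r" using J1 by simp
  finally have a: "(2::real)^J \<le> y/T0" using e by simp
  have "y/T0 < 2 powr (real J + 1)" using J2 e by (metis powr_less_cancel_iff one_less_numeral_iff semiring_norm(76))
  also have "\<dots> = 2^(Suc J)" by (simp add: powr_add powr_realpow)
  finally have b: "y/T0 < 2^(Suc J)" .
  have "T0 \<le> y/2^J" using a assms by (simp add: field_simps)
  moreover have "y/2^J < 2*T0" using b assms by (simp add: field_simps)
  ultimately show ?thesis by blast
qed

lemma moment_real:
  fixes F :: "real \<Rightarrow> real"
  assumes anti: "\<And>s t. s \<le> t \<Longrightarrow> F t \<le> F s"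
    and r: "\<And>t. t \<ge> Tz \<Longrightarrow> F (t/2) \<le> 3 * F t"
    and Tz: "Tz > 0" and nn: "\<And>t. 0 \<le> F t" and pos: "F (2*Tz) > 0" and y: "y \<ge> Tz"
  shows "\<exists>J. (\<Sum>j<J. (y/2^j)\<^sup>2 * F (y/2^(Suc j))) + (y/2^J)\<^sup>2 \<le> (12 + 4/F (2*Tz)) * (y\<^sup>2 * F y)"
proof -
  obtain J :: nat where J1: "Tz \<le> y/2^J" and J2: "y/2^J < 2*Tz" using exists_J[OF Tz y] by blast
  have it: "\<And>i. i \<le> J \<Longrightarrow> F (y/2^i) \<le> 3^i * F y" using ratio_iter[where F=F and T=Tz and y=y and J=J, OF anti r J1 Tz] by blast
  have ypos: "y > 0" using y Tz by simp
  have "(\<Sum>j<J. (y/2^j)\<^sup>2 * F (y/2^(Suc j))) \<le> (\<Sum>j<J. (y/2^j)\<^sup>2 * (3^(Suc j) * F y))"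
    by (intro sum_mono mult_left_mono it) auto
  also have "\<dots> = 3 * (y\<^sup>2 * F y) * (\<Sum>j<J. (3/4)^j)"
    unfolding sum_distrib_left
  proof (rule sum.cong)
    fix j assume "j \<in> {..<J}"
    have e4: "(4::real)^j = 2^j * 2^j"
    proof -
      have "(4::real)^j = (2*2)^j" by simp
      then show ?thesis by (simp only: power_mult_distrib)
    qed
    show "(y/2^j)\<^sup>2 * (3^(Suc j) * F y) = 3 * (y\<^sup>2 * F y) * (3/4)^j"
      by (simp add: power_divide e4 power2_eq_square field_simps)
  qed simp
  also have "(\<Sum>j<J. (3/4::real)^j) \<le> 4"
    by (simp add: sum_gp_strict)
  then have "3 * (y\<^sup>2 * F y) * (\<Sum>j<J. (3/4)^j) \<le> 3 * (y\<^sup>2 * F y) * 4"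
    using nn by (intro mult_left_mono) auto
  finally have S: "(\<Sum>j<J. (y/2^j)\<^sup>2 * F (y/2^(Suc j))) \<le> 12 * (y\<^sup>2 * F y)" by simp
  have R1: "(y/2^J)\<^sup>2 \<le> 4 * Tz\<^sup>2"
  proof -
    have "(y/2^J)\<^sup>2 \<le> (2*Tz)\<^sup>2" using J2 ypos by (intro power_mono) auto
    then show ?thesis by (simp add: power_mult_distrib)
  qed
  have "F (2*Tz) \<le> F (y/2^J)" using J2 by (intro anti) simp
  also have "\<dots> \<le> 3^J * F y" using it by simp
  finally have f1: "F (2*Tz) \<le> 3^J * F y" .
  have "Tz\<^sup>2 * 4^J \<le> (y/2^J)\<^sup>2 * 4^J" using J1 Tz by (intro mult_right_mono power_mono) auto
  also have "(y/2^J)\<^sup>2 * 4^J = y\<^sup>2"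
  proof -
    have e4: "(4::real)^J = 2^J * 2^J"
    proof -
      have "(4::real)^J = (2*2)^J" by simp
      then show ?thesis by (simp only: power_mult_distrib)
    qed
    show ?thesis by (simp add: power_divide e4 power2_eq_square field_simps)
  qed
  finally have y2: "Tz\<^sup>2 * 4^J \<le> y\<^sup>2" .
  have "Tz\<^sup>2 * F (2*Tz) \<le> Tz\<^sup>2 * (3^J * F y)" using f1 by (intro mult_left_mono) auto
  also have "\<dots> = (Tz\<^sup>2 * 3^J) * F y" by simp
  also have "\<dots> \<le> (Tz\<^sup>2 * 4^J) * F y" using nn by (intro mult_right_mono mult_left_mono power_mono) auto
  also have "\<dots> \<le> y\<^sup>2 * F y" using y2 nn by (intro mult_right_mono) auto
  finally have L: "Tz\<^sup>2 * F (2*Tz) \<le> y\<^sup>2 * F y" .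
  have "4 * Tz\<^sup>2 = 4 / F (2*Tz) * (Tz\<^sup>2 * F (2*Tz))" using pos by simp
  also have "\<dots> \<le> 4 / F (2*Tz) * (y\<^sup>2 * F y)" using L pos by (intro mult_left_mono) auto
  finally have R: "(y/2^J)\<^sup>2 \<le> 4 / F (2*Tz) * (y\<^sup>2 * F y)" using R1 by linarith
  show ?thesis using S R by (intro exI[of _ J]) (simp add: algebra_simps)
qed



definition trunc :: "real \<Rightarrow> real \<Rightarrow> real" where
  "trunc y z = (if 0 \<le> z \<and> z < y then z else 0)"

lemma trunc_meas[measurable]: "trunc y \<in> borel_measurable borel"
  unfolding trunc_def by measurable

lemma trunc_bdd: "y > 0 \<Longrightarrow> \<bar>trunc y z\<bar> \<le> y"
  unfolding trunc_def by auto

lemma trunc_nn: "0 \<le> trunc y z"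
  unfolding trunc_def by auto

lemma (in prob_space) int_bdd:
  fixes f :: "'a \<Rightarrow> real"
  assumes "f \<in> borel_measurable M" "\<And>\<omega>. \<omega> \<in> space M \<Longrightarrow> \<bar>f \<omega>\<bar> \<le> B"
  shows "integrable M f"
  using assms by (intro integrable_const_bound[where B=B]) auto

lemma (in prob_space) ident_exp:
  fixes \<xi> :: "nat \<Rightarrow> 'a \<Rightarrow> real"
  assumes rv: "\<And>i. \<xi> i \<in> borel_measurable M"
    and ident: "\<And>i. distr M borel (\<xi> i) = distr M borel (\<xi> 0)"
    and g: "(g :: real \<Rightarrow> real) \<in> borel_measurable borel"
  shows "expectation (\<lambda>\<omega>. g (\<xi> i \<omega>)) = expectation (\<lambda>\<omega>. g (\<xi> 0 \<omega>))"
proof -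
  have "expectation (\<lambda>\<omega>. g (\<xi> i \<omega>)) = integral\<^sup>L (distr M borel (\<xi> i)) g"
    using integral_distr[OF rv g] by simp
  also have "\<dots> = integral\<^sup>L (distr M borel (\<xi> 0)) g" by (simp only: ident[of i])
  also have "\<dots> = expectation (\<lambda>\<omega>. g (\<xi> 0 \<omega>))"
    using integral_distr[OF rv g] by simp
  finally show ?thesis .
qed

lemma (in prob_space) ident_prob:
  fixes \<xi> :: "nat \<Rightarrow> 'a \<Rightarrow> real"
  assumes rv: "\<And>i. \<xi> i \<in> borel_measurable M"
    and ident: "\<And>i. distr M borel (\<xi> i) = distr M borel (\<xi> 0)"
  shows "prob {\<omega>\<in>space M. \<xi> i \<omega> \<ge> t} = prob {\<omega>\<in>space M. \<xi> 0 \<omega> \<ge> t}"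
proof -
  have e: "\<And>j. {\<omega>\<in>space M. \<xi> j \<omega> \<ge> t} = \<xi> j -` {t..} \<inter> space M" by auto
  have "prob {\<omega>\<in>space M. \<xi> i \<omega> \<ge> t} = measure (distr M borel (\<xi> i)) {t..}"
    unfolding e by (rule measure_distr[symmetric]) (use rv atLeast_borel in auto)
  also have "\<dots> = measure (distr M borel (\<xi> 0)) {t..}" by (simp only: ident[of i])
  also have "\<dots> = prob {\<omega>\<in>space M. \<xi> 0 \<omega> \<ge> t}"
    unfolding e by (rule measure_distr[OF rv]) simp
  finally show ?thesis .
qed

lemma (in prob_space) exp_ind:
  fixes X :: "'a \<Rightarrow> real"
  assumes rv: "X \<in> borel_measurable M"
  shows "expectation (\<lambda>\<omega>. indicator {c..} (X \<omega>) :: real) = prob {\<omega>\<in>space M. X \<omega> \<ge> c}"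
proof -
  have "expectation (\<lambda>\<omega>. indicator {c..} (X \<omega>) :: real) = integral\<^sup>L (distr M borel X) (indicator {c..})"
    using integral_distr[OF rv, of "indicator {c..} :: real \<Rightarrow> real"] by simp
  also have "\<dots> = measure (distr M borel X) {c..}" by simp
  also have "\<dots> = measure M (X -` {c..} \<inter> space M)" by (rule measure_distr) (use rv atLeast_borel in auto)
  also have "X -` {c..} \<inter> space M = {\<omega>\<in>space M. X \<omega> \<ge> c}" by auto
  finally show ?thesis .
qed

lemma (in prob_space) F_anti:
  fixes X :: "'a \<Rightarrow> real"
  assumes rv: "X \<in> borel_measurable M"
  shows "s \<le> t \<Longrightarrow> prob {\<omega>\<in>space M. X \<omega> \<ge> t} \<le> prob {\<omega>\<in>space M. X \<omega> \<ge> s}"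
proof -
  assume st: "s \<le> t"
  have "{\<omega>\<in>space M. X \<omega> \<ge> t} \<subseteq> {\<omega>\<in>space M. X \<omega> \<ge> s}" using st by auto
  moreover have "{\<omega>\<in>space M. X \<omega> \<ge> s} \<in> events" using rv by measurable
  ultimately show ?thesis by (rule finite_measure_mono)
qed

lemma (in prob_space) ind_int:
  fixes X :: "'a \<Rightarrow> real"
  assumes rv[measurable]: "X \<in> borel_measurable M"
  shows "integrable M (\<lambda>\<omega>. indicator {c..} (X \<omega>) :: real)"
  by (rule int_bdd[where B=1]) (auto simp: indicator_def)

lemma (in prob_space) mean_bound:
  assumes rv[measurable]: "X \<in> borel_measurable M" and nn: "AE \<omega> in M. X \<omega> \<ge> 0"
    and F_def: "\<And>t. F t = prob {\<omega>\<in>space M. X \<omega> \<ge> t}" and y: "y > 0"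
  shows "expectation (\<lambda>\<omega>. trunc y (X \<omega>)) \<le> integral {0..y} F"
proof -
  have anti: "\<And>s t. s \<le> t \<Longrightarrow> F t \<le> F s" unfolding F_def using F_anti[OF rv] by blast
  have key: "expectation (\<lambda>\<omega>. trunc y (X \<omega>)) \<le> integral {0..y} F + y / real N" if N: "N \<ge> 1" for N :: nat
  proof -
    define h where "h = y / real N"
    have h: "h > 0" unfolding h_def using N y by simp
    have Nh: "real N * h = y" unfolding h_def using N by simp
    have "expectation (\<lambda>\<omega>. trunc y (X \<omega>)) \<le> expectation (\<lambda>\<omega>. h + (\<Sum>i\<in>{1..N}. h * indicator {real i * h..} (X \<omega>)))"
    proof (rule integral_mono_AE)
      show "integrable M (\<lambda>\<omega>. trunc y (X \<omega>))"
        by (rule int_bdd[where B=y]) (use trunc_bdd y in auto)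
      show "integrable M (\<lambda>\<omega>. h + (\<Sum>i\<in>{1..N}. h * indicator {real i * h..} (X \<omega>)))"
        by (intro Bochner_Integration.integrable_add Bochner_Integration.integrable_sum integrable_mult_right integrable_const ind_int[OF rv])
      show "AE \<omega> in M. trunc y (X \<omega>) \<le> h + (\<Sum>i\<in>{1..N}. h * indicator {real i * h..} (X \<omega>))"
        using nn
      proof eventually_elim
        case (elim \<omega>)
        show ?case
        proof (cases "X \<omega> < y")
          case True
          then show ?thesis using riemann_pt[OF h elim, of N] Nh elim by (simp add: trunc_def)
        next
          case False
          have "0 \<le> (\<Sum>i\<in>{1..N}. h * indicator {real i * h..} (X \<omega>))" using h by (intro sum_nonneg) auto
          then show ?thesis using False h by (simp add: trunc_def)
        qed
      qed
    qed
    also have "\<dots> = h + (\<Sum>i\<in>{1..N}. h * F (real i * h))"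
    proof -
      have "expectation (\<lambda>\<omega>. h + (\<Sum>i\<in>{1..N}. h * indicator {real i * h..} (X \<omega>)))
          = expectation (\<lambda>\<omega>. h) + expectation (\<lambda>\<omega>. \<Sum>i\<in>{1..N}. h * indicator {real i * h..} (X \<omega>))"
        by (intro Bochner_Integration.integral_add) (intro Bochner_Integration.integrable_sum integrable_mult_right integrable_const ind_int[OF rv])+
      also have "expectation (\<lambda>\<omega>. \<Sum>i\<in>{1..N}. h * indicator {real i * h..} (X \<omega>))
          = (\<Sum>i\<in>{1..N}. expectation (\<lambda>\<omega>. h * indicator {real i * h..} (X \<omega>)))"
        by (intro Bochner_Integration.integral_sum) (intro integrable_mult_right ind_int[OF rv])
      also have "\<dots> = (\<Sum>i\<in>{1..N}. h * F (real i * h))"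
        by (intro sum.cong refl) (simp add: exp_ind F_def)
      finally show ?thesis by (simp add: prob_space)
    qed
    also have "\<dots> \<le> h + integral {0..real N * h} F" using riemann_int[OF anti h, where N=N] by simp
    finally show ?thesis using Nh unfolding h_def by simp
  qed
  show ?thesis
  proof (rule ccontr)
    assume "\<not> ?thesis"
    then have d: "expectation (\<lambda>\<omega>. trunc y (X \<omega>)) - integral {0..y} F > 0" by simp
    obtain N :: nat where N: "y / (expectation (\<lambda>\<omega>. trunc y (X \<omega>)) - integral {0..y} F) < real N"
      using reals_Archimedean2 by blast
    have N1: "N \<ge> 1" using N d y by (metis divide_pos_pos less_le_not_le of_nat_0 less_one linorder_not_le order_less_trans)
    have "y / real N < expectation (\<lambda>\<omega>. trunc y (X \<omega>)) - integral {0..y} F"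
      using N d N1 by (simp add: field_simps)
    then show False using key[OF N1] by simp
  qed
qed

lemma (in prob_space) moment_bound:
  assumes rv[measurable]: "X \<in> borel_measurable M" and nn: "AE \<omega> in M. X \<omega> \<ge> 0"
    and F_def: "\<And>t. F t = prob {\<omega>\<in>space M. X \<omega> \<ge> t}" and y: "y > 0"
  shows "expectation (\<lambda>\<omega>. (trunc y (X \<omega>))\<^sup>2) \<le> (\<Sum>j<J. (y/2^j)\<^sup>2 * F (y/2^(Suc j))) + (y/2^J)\<^sup>2"
proof -
  have "expectation (\<lambda>\<omega>. (trunc y (X \<omega>))\<^sup>2) \<le> expectation (\<lambda>\<omega>. (\<Sum>j<J. (y/2^j)\<^sup>2 * indicator {y/2^(Suc j)..} (X \<omega>)) + (y/2^J)\<^sup>2)"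
  proof (rule integral_mono_AE)
    show "integrable M (\<lambda>\<omega>. (trunc y (X \<omega>))\<^sup>2)"
    proof (rule int_bdd[where B="y\<^sup>2"])
      fix \<omega> have "trunc y (X \<omega>) \<le> y" using trunc_bdd[OF y] by (metis abs_le_D1)
      then have "(trunc y (X \<omega>))\<^sup>2 \<le> y\<^sup>2" by (rule power_mono) (rule trunc_nn)
      then show "\<bar>(trunc y (X \<omega>))\<^sup>2\<bar> \<le> y\<^sup>2" by simp
    qed simp
    show "integrable M (\<lambda>\<omega>. (\<Sum>j<J. (y/2^j)\<^sup>2 * indicator {y/2^(Suc j)..} (X \<omega>)) + (y/2^J)\<^sup>2)"
      by (intro Bochner_Integration.integrable_add Bochner_Integration.integrable_sum integrable_mult_right integrable_const ind_int[OF rv])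
    show "AE \<omega> in M. (trunc y (X \<omega>))\<^sup>2 \<le> (\<Sum>j<J. (y/2^j)\<^sup>2 * indicator {y/2^(Suc j)..} (X \<omega>)) + (y/2^J)\<^sup>2"
      using nn
    proof eventually_elim
      case (elim \<omega>)
      show ?case
      proof (cases "X \<omega> < y")
        case True
        then show ?thesis using dyadic_pt[OF elim True, of J] elim by (simp add: trunc_def)
      next
        case False
        have "0 \<le> (\<Sum>j<J. (y/2^j)\<^sup>2 * indicator {y/2^(Suc j)..} (X \<omega>))" by (intro sum_nonneg) auto
        then show ?thesis using False by (simp add: trunc_def)
      qed
    qed
  qed
  also have "\<dots> = (\<Sum>j<J. (y/2^j)\<^sup>2 * F (y/2^(Suc j))) + (y/2^J)\<^sup>2"
  proof -
    have "expectation (\<lambda>\<omega>. (\<Sum>j<J. (y/2^j)\<^sup>2 * indicator {y/2^(Suc j)..} (X \<omega>)) + (y/2^J)\<^sup>2)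
        = expectation (\<lambda>\<omega>. \<Sum>j<J. (y/2^j)\<^sup>2 * indicator {y/2^(Suc j)..} (X \<omega>)) + expectation (\<lambda>\<omega>. (y/2^J)\<^sup>2)"
      by (intro Bochner_Integration.integral_add) (intro Bochner_Integration.integrable_sum integrable_mult_right integrable_const ind_int[OF rv])+
    also have "expectation (\<lambda>\<omega>. \<Sum>j<J. (y/2^j)\<^sup>2 * indicator {y/2^(Suc j)..} (X \<omega>))
        = (\<Sum>j<J. expectation (\<lambda>\<omega>. (y/2^j)\<^sup>2 * indicator {y/2^(Suc j)..} (X \<omega>)))"
      by (intro Bochner_Integration.integral_sum) (intro integrable_mult_right ind_int[OF rv])
    also have "\<dots> = (\<Sum>j<J. (y/2^j)\<^sup>2 * F (y/2^(Suc j)))"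
      by (intro sum.cong refl) (simp add: exp_ind F_def)
    finally show ?thesis by (simp add: prob_space)
  qed
  finally show ?thesis .
qed



lemma (in prob_space) trunc_bound:
  fixes \<xi> :: "nat \<Rightarrow> 'a \<Rightarrow> real"
  assumes rv[measurable]: "\<And>i. \<xi> i \<in> borel_measurable M"
    and indep: "indep_vars (\<lambda>_. borel) \<xi> UNIV"
    and ident: "\<And>i. distr M borel (\<xi> i) = distr M borel (\<xi> 0)"
    and nonneg: "\<And>i. AE \<omega> in M. \<xi> i \<omega> \<ge> 0"
    and y: "y > 0" and b: "b > 0"
    and mg: "expectation (\<lambda>\<omega>. trunc y (\<xi> 0 \<omega>)) \<le> g"
  shows "prob {\<omega>\<in>space M. (\<Sum>i<k. \<xi> i \<omega>) - real k * g \<ge> b}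
     \<le> real k * prob {\<omega>\<in>space M. \<xi> 0 \<omega> \<ge> y} + real k * expectation (\<lambda>\<omega>. (trunc y (\<xi> 0 \<omega>))\<^sup>2) / b\<^sup>2"
proof -
  define m where "m = expectation (\<lambda>\<omega>. trunc y (\<xi> 0 \<omega>))"
  define Y where "Y i \<omega> = trunc y (\<xi> i \<omega>) - m" for i \<omega>
  define f where "f \<omega> = (\<Sum>i<k. Y i \<omega>)" for \<omega>
  define B0 where "B0 = y + \<bar>m\<bar>"
  have Ymeas[measurable]: "\<And>i. Y i \<in> borel_measurable M" unfolding Y_def by measurable
  have fmeas[measurable]: "f \<in> borel_measurable M" unfolding f_def by measurable
  have Ybdd: "\<bar>Y i \<omega>\<bar> \<le> B0" for i \<omega>
  proof -
    have "\<bar>Y i \<omega>\<bar> \<le> \<bar>trunc y (\<xi> i \<omega>)\<bar> + \<bar>m\<bar>" unfolding Y_def by (rule abs_triangle_ineq4)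
    then show ?thesis using trunc_bdd[OF y, of "\<xi> i \<omega>"] unfolding B0_def by linarith
  qed
  have B0: "0 \<le> B0" unfolding B0_def using y by simp
  have Yint: "\<And>i. integrable M (Y i)" by (rule int_bdd[where B=B0]) (auto simp: Ybdd)
  have YYint: "\<And>i j. integrable M (\<lambda>\<omega>. Y i \<omega> * Y j \<omega>)"
  proof (rule int_bdd[where B="B0 * B0"])
    fix i j \<omega> show "\<bar>Y i \<omega> * Y j \<omega>\<bar> \<le> B0 * B0"
      unfolding abs_mult by (intro mult_mono Ybdd) (auto simp: B0)
  qed simp
  have Tint: "integrable M (\<lambda>\<omega>. trunc y (\<xi> i \<omega>))" for i
    by (rule int_bdd[where B=y]) (auto simp: trunc_bdd[OF y])
  have T2int: "integrable M (\<lambda>\<omega>. (trunc y (\<xi> i \<omega>))\<^sup>2)" for i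
  proof (rule int_bdd[where B="y*y"])
    fix \<omega> show "\<bar>(trunc y (\<xi> i \<omega>))\<^sup>2\<bar> \<le> y * y"
      unfolding power2_eq_square abs_mult using y by (intro mult_mono trunc_bdd[OF y]) auto
  qed simp
  have EY: "expectation (Y i) = 0" for i
  proof -
    have "expectation (Y i) = expectation (\<lambda>\<omega>. trunc y (\<xi> i \<omega>)) - expectation (\<lambda>\<omega>. m)"
      unfolding Y_def by (rule Bochner_Integration.integral_diff) (auto intro: Tint)
    also have "expectation (\<lambda>\<omega>. trunc y (\<xi> i \<omega>)) = m"
      unfolding m_def by (rule ident_exp[where \<xi>=\<xi>, OF rv ident]) simp
    finally show ?thesis by (simp add: prob_space)
  qed
  have EY2: "expectation (\<lambda>\<omega>. (Y i \<omega>)\<^sup>2) \<le> expectation (\<lambda>\<omega>. (trunc y (\<xi> 0 \<omega>))\<^sup>2)" for i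
  proof -
    have "expectation (\<lambda>\<omega>. (Y i \<omega>)\<^sup>2) = expectation (\<lambda>\<omega>. (trunc y (\<xi> 0 \<omega>) - m)\<^sup>2)"
      unfolding Y_def by (rule ident_exp[where \<xi>=\<xi>, OF rv ident, where g="\<lambda>z. (trunc y z - m)\<^sup>2"]) simp
    also have "\<dots> = variance (\<lambda>\<omega>. trunc y (\<xi> 0 \<omega>))" unfolding m_def by simp
    also have "\<dots> = expectation (\<lambda>\<omega>. (trunc y (\<xi> 0 \<omega>))\<^sup>2) - m\<^sup>2"
      unfolding m_def by (rule variance_eq) (auto intro: Tint T2int)
    finally show ?thesis by simp
  qed
  have indY: "indep_vars (\<lambda>_. borel) Y UNIV"
  proof -
    have "indep_vars (\<lambda>_. borel) (\<lambda>i \<omega>. (\<lambda>z. trunc y z - m) (\<xi> i \<omega>)) UNIV"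
      by (rule indep_vars_compose2[OF indep]) simp
    then show ?thesis unfolding Y_def by simp
  qed
  have cross: "expectation (\<lambda>\<omega>. Y i \<omega> * Y j \<omega>) = 0" if ij: "i \<noteq> j" for i j
  proof -
    have "indep_vars (\<lambda>_. borel) Y {i,j}" by (rule indep_vars_subset[OF indY]) auto
    then have "expectation (\<lambda>\<omega>. \<Prod>l\<in>{i,j}. Y l \<omega>) = (\<Prod>l\<in>{i,j}. expectation (Y l))"
      by (intro indep_vars_lebesgue_integral) (auto intro: Yint)
    then show ?thesis using ij EY by simp
  qed
  have f2eq: "(f \<omega>)\<^sup>2 = (\<Sum>i<k. \<Sum>j<k. Y i \<omega> * Y j \<omega>)" for \<omega>
    unfolding f_def power2_eq_square by (rule sum_product)
  have f2int: "integrable M (\<lambda>\<omega>. (f \<omega>)\<^sup>2)"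
    unfolding f2eq by (intro Bochner_Integration.integrable_sum YYint)
  have Ef2: "expectation (\<lambda>\<omega>. (f \<omega>)\<^sup>2) = (\<Sum>i<k. expectation (\<lambda>\<omega>. (Y i \<omega>)\<^sup>2))"
  proof -
    have "expectation (\<lambda>\<omega>. (f \<omega>)\<^sup>2) = (\<Sum>i<k. \<Sum>j<k. expectation (\<lambda>\<omega>. Y i \<omega> * Y j \<omega>))"
      unfolding f2eq
      by (subst Bochner_Integration.integral_sum, intro Bochner_Integration.integrable_sum YYint)
         (intro sum.cong refl Bochner_Integration.integral_sum YYint)
    also have "\<dots> = (\<Sum>i<k. expectation (\<lambda>\<omega>. Y i \<omega> * Y i \<omega>))"
    proof (rule sum.cong[OF refl])
      fix i assume i: "i \<in> {..<k}"
      have "(\<Sum>j<k. expectation (\<lambda>\<omega>. Y i \<omega> * Y j \<omega>)) = expectation (\<lambda>\<omega>. Y i \<omega> * Y i \<omega>) + (\<Sum>j\<in>{..<k}-{i}. expectation (\<lambda>\<omega>. Y i \<omega> * Y j \<omega>))"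
        using i by (subst sum.remove[of _ i]) auto
      also have "(\<Sum>j\<in>{..<k}-{i}. expectation (\<lambda>\<omega>. Y i \<omega> * Y j \<omega>)) = 0"
        by (rule sum.neutral) (auto intro: cross)
      finally show "(\<Sum>j<k. expectation (\<lambda>\<omega>. Y i \<omega> * Y j \<omega>)) = expectation (\<lambda>\<omega>. Y i \<omega> * Y i \<omega>)" by simp
    qed
    finally show ?thesis by (simp add: power2_eq_square)
  qed
  have Ef: "expectation f = 0"
    unfolding f_def by (subst Bochner_Integration.integral_sum) (auto intro: Yint simp: EY)
  define A where "A = {\<omega>\<in>space M. (\<Sum>i<k. \<xi> i \<omega>) - real k * g \<ge> b}"
  define Bs where "Bs = (\<Union>i\<in>{..<k}. {\<omega>\<in>space M. \<xi> i \<omega> \<ge> y})"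
  define C where "C = {\<omega>\<in>space M. \<bar>f \<omega> - expectation f\<bar> \<ge> b}"
  have Bs_ev: "Bs \<in> events" unfolding Bs_def by measurable
  have C_ev: "C \<in> events" unfolding C_def by measurable
  have "AE \<omega> in M. \<forall>i. \<xi> i \<omega> \<ge> 0" using nonneg by (simp add: AE_all_countable)
  then have "AE \<omega> in M. \<omega> \<in> A \<longrightarrow> \<omega> \<in> Bs \<union> C"
  proof eventually_elim
    case (elim \<omega>)
    show ?case
    proof (intro impI)
      assume wA: "\<omega> \<in> A"
      show "\<omega> \<in> Bs \<union> C"
      proof (cases "\<exists>i<k. \<xi> i \<omega> \<ge> y")
        case True
        then show ?thesis using wA unfolding A_def Bs_def by auto
      next
        case False
        then have "\<And>i. i < k \<Longrightarrow> trunc y (\<xi> i \<omega>) = \<xi> i \<omega>" using elim by (auto simp: trunc_def)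
        then have "f \<omega> = (\<Sum>i<k. \<xi> i \<omega>) - real k * m"
          unfolding f_def Y_def by (simp add: sum_subtractf)
        moreover have "real k * m \<le> real k * g" using mg unfolding m_def by (intro mult_left_mono) auto
        ultimately have "f \<omega> \<ge> b" using wA unfolding A_def by auto
        then show ?thesis using wA b Ef unfolding A_def C_def by auto
      qed
    qed
  qed
  then have "prob A \<le> prob (Bs \<union> C)" using Bs_ev C_ev by (intro finite_measure_mono_AE) auto
  also have "\<dots> \<le> prob Bs + prob C" using Bs_ev C_ev by (rule measure_Un_le)
  also have "prob Bs \<le> (\<Sum>i<k. prob {\<omega>\<in>space M. \<xi> i \<omega> \<ge> y})"
    unfolding Bs_def by (rule finite_measure_subadditive_finite) auto
  also have "\<dots> = real k * prob {\<omega>\<in>space M. \<xi> 0 \<omega> \<ge> y}"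
    by (subst sum.cong[OF refl ident_prob[where \<xi>=\<xi>, OF rv ident]]) simp_all
  also have "prob C \<le> variance f / b\<^sup>2"
    unfolding C_def by (rule Chebyshev_inequality) (auto intro: f2int b)
  also have "variance f = expectation (\<lambda>\<omega>. (f \<omega>)\<^sup>2)" using Ef by simp
  also have "\<dots> \<le> real k * expectation (\<lambda>\<omega>. (trunc y (\<xi> 0 \<omega>))\<^sup>2)"
    unfolding Ef2 using sum_mono[of "{..<k}", OF EY2] by simp
  finally show ?thesis unfolding A_def using b by (simp add: divide_right_mono)
qed



theorem corollary1:
  fixes M :: "'a measure" and \<xi> :: "nat \<Rightarrow> 'a \<Rightarrow> real"
    and x a :: "nat \<Rightarrow> real"
    and Fbar G :: "real \<Rightarrow> real" and S :: "nat \<Rightarrow> 'a \<Rightarrow> real"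
  assumes "prob_space M"
    and rv: "\<And>i. \<xi> i \<in> borel_measurable M"
    and indep: "prob_space.indep_vars M (\<lambda>_. borel) \<xi> UNIV"
    and ident: "\<And>i. distr M borel (\<xi> i) = distr M borel (\<xi> 0)"
    and nonneg: "\<And>i. AE \<omega> in M. \<xi> i \<omega> \<ge> 0"
    and Fbar_def: "\<And>t. Fbar t = measure M {\<omega> \<in> space M. \<xi> 0 \<omega> \<ge> t}"
    and tail: "\<exists>l. slowly_varying l \<and> (\<forall>\<^sub>F t in at_top. Fbar t = l t / t)"
    and G_def: "\<And>t. G t = integral {0..t} Fbar"
    and S_def: "\<And>k \<omega>. S k \<omega> = (\<Sum>i<k. \<xi> i \<omega>)"
    and x_pos: "\<And>n. n \<ge> 1 \<Longrightarrow> x n > 0"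
    and x_liminf: "liminf (\<lambda>n. ereal (x n / (real n * G (x n)))) > 0"
    and a_pos: "\<And>n. n \<ge> 1 \<Longrightarrow> a n > 0"
    and a_lim: "\<exists>L>0. a \<longlonglongrightarrow> L"
  shows "(\<lambda>n. Max ((\<lambda>k. measure M {\<omega> \<in> space M. S k \<omega> - real k * G (x n) \<ge> a n * x n}) ` {1..n}))
           \<in> O(\<lambda>n. real n * Fbar (x n))"
proof -
  interpret prob_space M by fact
  have anti: "\<And>s t. s \<le> t \<Longrightarrow> Fbar t \<le> Fbar s"
    unfolding Fbar_def using F_anti[OF rv] by blast
  have Fnn: "\<And>t. 0 \<le> Fbar t" unfolding Fbar_def by simp
  obtain l where sv: "slowly_varying l" and ev: "\<forall>\<^sub>F t in at_top. Fbar t = l t / t" using tail by blast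
  have svd: "\<And>lam. lam > 0 \<Longrightarrow> ((\<lambda>x. l (lam * x) / l x) \<longlongrightarrow> 1) at_top"
    using sv unfolding slowly_varying_def by blast
  have "((\<lambda>t. l (1 * t) / l t) \<longlongrightarrow> 1) at_top" by (rule svd) simp
  then have ev1: "\<forall>\<^sub>F t in at_top. l (1 * t) / l t > 1/2" by (rule order_tendstoD) simp
  have "((\<lambda>t. l ((1/2) * t) / l t) \<longlongrightarrow> 1) at_top" by (rule svd) simp
  then have ev2: "\<forall>\<^sub>F t in at_top. l ((1/2) * t) / l t < 3/2" by (rule order_tendstoD) simp
  obtain N1 where N1: "\<And>t. t \<ge> N1 \<Longrightarrow> Fbar t = l t / t \<and> l (1 * t) / l t > 1/2 \<and> t > 0"
    using eventually_conj[OF eventually_conj[OF ev ev1] eventually_gt_at_top[of 0]]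
    unfolding eventually_at_top_linorder by blast
  obtain N2 where N2: "\<And>t. t \<ge> N2 \<Longrightarrow> l ((1/2) * t) / l t < 3/2"
    using ev2 unfolding eventually_at_top_linorder by blast
  have lpos: "l t > 0" and Fpos': "Fbar t > 0" if t: "t \<ge> N1" for t
  proof -
    from N1[OF t] have e: "Fbar t = l t / t" and r: "l t / l t > 1/2" and tp: "t > 0" by auto
    have "l t \<noteq> 0" using r by auto
    moreover have "l t \<ge> 0" using e Fnn[of t] tp by (simp add: zero_le_divide_iff)
    ultimately show "l t > 0" by simp
    then show "Fbar t > 0" using e tp by simp
  qed
  have Fpos: "Fbar t > 0" for t
  proof -
    have "Fbar (max t N1) > 0" by (rule Fpos') simp
    moreover have "Fbar (max t N1) \<le> Fbar t" by (rule anti) simp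
    ultimately show ?thesis by simp
  qed
  define T0 where "T0 = max 1 (max (2 * N1) N2)"
  have T0: "T0 > 0" unfolding T0_def by simp
  have ratio: "Fbar (t/2) \<le> 3 * Fbar t" if t: "t \<ge> T0" for t
  proof -
    have t1: "t/2 \<ge> N1" "t \<ge> N1" "t \<ge> N2" "t > 0" using t unfolding T0_def by auto
    have "Fbar (t/2) = l (t/2) / (t/2)" using N1[OF t1(1)] by simp
    moreover have "Fbar t = l t / t" using N1[OF t1(2)] by simp
    moreover have "l (t/2) < 3/2 * l t"
    proof -
      have "l ((1/2) * t) / l t < 3/2" by (rule N2[OF t1(3)])
      then show ?thesis using lpos[OF t1(2)] by (simp add: field_simps)
    qed
    ultimately have "t * Fbar (t/2) < t * (3 * Fbar t)" using t1(4) by (simp add: field_simps)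
    then show ?thesis using t1(4) by simp
  qed
  define K where "K = 12 + 4 / Fbar (2*T0)"
  have K: "K \<ge> 0" unfolding K_def using Fpos[of "2*T0"] by simp
  have mom: "expectation (\<lambda>\<omega>. (trunc y (\<xi> 0 \<omega>))\<^sup>2) \<le> K * (y\<^sup>2 * Fbar y)" if y: "y \<ge> T0" for y
  proof -
    obtain J where J: "(\<Sum>j<J. (y/2^j)\<^sup>2 * Fbar (y/2^(Suc j))) + (y/2^J)\<^sup>2 \<le> K * (y\<^sup>2 * Fbar y)"
      using moment_real[where F=Fbar and Tz=T0 and y=y, OF anti ratio T0 Fnn Fpos y] unfolding K_def by blast
    have "expectation (\<lambda>\<omega>. (trunc y (\<xi> 0 \<omega>))\<^sup>2) \<le> (\<Sum>j<J. (y/2^j)\<^sup>2 * Fbar (y/2^(Suc j))) + (y/2^J)\<^sup>2"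
      by (rule moment_bound[OF rv nonneg Fbar_def]) (use y T0 in simp)
    then show ?thesis using J by simp
  qed
  have mean: "expectation (\<lambda>\<omega>. trunc y (\<xi> 0 \<omega>)) \<le> G y" if y: "y > 0" for y
    unfolding G_def by (rule mean_bound[OF rv nonneg Fbar_def y])
  obtain L where L: "L > 0" "a \<longlonglongrightarrow> L" using a_lim by blast
  have evA: "\<forall>\<^sub>F n in sequentially. a n > L/2"
    using L(2) by (rule order_tendstoD) (use L in simp)
  obtain c where c: "0 < ereal c" "ereal c < liminf (\<lambda>n. ereal (x n / (real n * G (x n))))"
    using ereal_dense2[OF x_liminf] by blast
  have cpos: "c > 0" using c(1) by simp
  have evC: "\<forall>\<^sub>F n in sequentially. ereal (x n / (real n * G (x n))) > ereal c"
    by (rule less_LiminfD) (rule c(2))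
  have evX: "\<forall>\<^sub>F n in sequentially. x n \<ge> T0"
  proof -
    define N0 where "N0 = nat \<lceil>1 / (c * Fbar T0)\<rceil> + 1"
    have "\<forall>\<^sub>F n in sequentially. n \<ge> N0" by (rule eventually_ge_at_top)
    then show ?thesis using evC
    proof eventually_elim
      case (elim n)
      have n1: "n \<ge> 1" using elim unfolding N0_def by simp
      have rn: "real n > 1 / (c * Fbar T0)" using elim(1) unfolding N0_def by linarith
      show ?case
      proof (rule ccontr)
        assume "\<not> ?case"
        then have xT: "x n < T0" by simp
        have xp: "x n > 0" by (rule x_pos[OF n1])
        have "x n * Fbar T0 \<le> x n * Fbar (x n)" using xT xp by (intro mult_left_mono anti) auto
        also have "\<dots> \<le> G (x n)" unfolding G_def using G_ge[where F=Fbar and x="x n", OF anti] xp by simp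
        finally have Gx: "x n * Fbar T0 \<le> G (x n)" .
        have Gp: "G (x n) > 0" using Gx xp Fpos[of T0] by (smt (verit) mult_pos_pos)
        have "c < x n / (real n * G (x n))" using elim(2) by simp
        also have "\<dots> \<le> x n / (real n * (x n * Fbar T0))"
          using Gx xp n1 Fpos[of T0] Gp by (intro divide_left_mono mult_left_mono mult_pos_pos) auto
        also have "\<dots> = 1 / (real n * Fbar T0)" using xp by simp
        finally have "c * (real n * Fbar T0) < 1" using n1 Fpos[of T0] by (simp add: field_simps)
        moreover have "1 < c * (real n * Fbar T0)" using rn cpos Fpos[of T0] by (simp add: field_simps)
        ultimately show False by simp
      qed
    qed
  qed
  define C where "C = 1 + K * 4 / L\<^sup>2"
  show ?thesis
  proof (rule bigoI[where c=C])
    have "\<forall>\<^sub>F n in sequentially. n \<ge> 1" by (rule eventually_ge_at_top)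
    then show "\<forall>\<^sub>F n in sequentially. norm (Max ((\<lambda>k. measure M {\<omega> \<in> space M. S k \<omega> - real k * G (x n) \<ge> a n * x n}) ` {1..n}))
        \<le> C * norm (real n * Fbar (x n))"
      using evA evX
    proof eventually_elim
      case (elim n)
      define y where "y = x n"
      have y: "y \<ge> T0" "y > 0" using elim T0 unfolding y_def by auto
      have an: "a n > L/2" using elim by simp
      have bnd: "measure M {\<omega> \<in> space M. S k \<omega> - real k * G y \<ge> a n * y} \<le> C * (real n * Fbar y)"
        if k: "k \<in> {1..n}" for k
      proof -
        have b: "a n * y > 0" using an L y by simp
        have "measure M {\<omega> \<in> space M. S k \<omega> - real k * G y \<ge> a n * y}
            \<le> real k * prob {\<omega>\<in>space M. \<xi> 0 \<omega> \<ge> y} + real k * expectation (\<lambda>\<omega>. (trunc y (\<xi> 0 \<omega>))\<^sup>2) / (a n * y)\<^sup>2"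
          unfolding S_def by (rule trunc_bound[OF rv indep ident nonneg y(2) b mean[OF y(2)]])
        also have "\<dots> \<le> real n * Fbar y + real n * (K * (y\<^sup>2 * Fbar y)) / (a n * y)\<^sup>2"
        proof -
          have k1: "real k \<le> real n" using k by simp
          have p1: "prob {\<omega>\<in>space M. \<xi> 0 \<omega> \<ge> y} = Fbar y" using Fbar_def by simp
          have e1: "expectation (\<lambda>\<omega>. (trunc y (\<xi> 0 \<omega>))\<^sup>2) \<le> K * (y\<^sup>2 * Fbar y)" by (rule mom[OF y(1)])
          have e0: "0 \<le> expectation (\<lambda>\<omega>. (trunc y (\<xi> 0 \<omega>))\<^sup>2)" by (rule integral_nonneg_AE) simp
          have t1: "real k * Fbar y \<le> real n * Fbar y" using k1 Fnn by (intro mult_right_mono) auto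
          have t2: "real k * expectation (\<lambda>\<omega>. (trunc y (\<xi> 0 \<omega>))\<^sup>2) \<le> real n * (K * (y\<^sup>2 * Fbar y))"
            using k1 e1 e0 by (intro mult_mono) auto
          have t3: "real k * expectation (\<lambda>\<omega>. (trunc y (\<xi> 0 \<omega>))\<^sup>2) / (a n * y)\<^sup>2 \<le> real n * (K * (y\<^sup>2 * Fbar y)) / (a n * y)\<^sup>2"
            using t2 by (intro divide_right_mono) auto
          show ?thesis unfolding p1 using t1 t3 by linarith
        qed
        also have "real n * (K * (y\<^sup>2 * Fbar y)) / (a n * y)\<^sup>2 = real n * Fbar y * (K / (a n)\<^sup>2)"
          using y b by (simp add: field_simps power2_eq_square)
        also have "K / (a n)\<^sup>2 \<le> K * 4 / L\<^sup>2"
        proof -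
          have "(L/2)\<^sup>2 \<le> (a n)\<^sup>2" using an L by (intro power_mono) auto
          then have "L\<^sup>2 / 4 \<le> (a n)\<^sup>2" by (simp add: power_divide)
          then have "K / (a n)\<^sup>2 \<le> K / (L\<^sup>2 / 4)" using K L by (intro divide_left_mono) (auto intro!: mult_pos_pos)
          then show ?thesis by simp
        qed
        then have "real n * Fbar y * (K / (a n)\<^sup>2) \<le> real n * Fbar y * (K * 4 / L\<^sup>2)"
          using Fnn by (intro mult_left_mono) auto
        finally show ?thesis unfolding C_def by (simp add: algebra_simps)
      qed
      have ne: "{1..n} \<noteq> {}" using elim by simp
      have "Max ((\<lambda>k. measure M {\<omega> \<in> space M. S k \<omega> - real k * G y \<ge> a n * y}) ` {1..n}) \<le> C * (real n * Fbar y)"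
        using bnd ne by (subst Max_le_iff) auto
      moreover have "0 \<le> Max ((\<lambda>k. measure M {\<omega> \<in> space M. S k \<omega> - real k * G y \<ge> a n * y}) ` {1..n})"
        using ne by (subst Max_ge_iff) auto
      moreover have "0 \<le> real n * Fbar y" using Fnn by simp
      ultimately show ?case unfolding y_def by simp
    qed
  qed
qed

end
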